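(* Let $n\geq1$ and let $G_n$ be the connected anti-regular graph with loops on $n$ vertices. The eigenvalues $\lambda_1,\ldots,\lambda_n$ of the adjacency matrix $A(G_n)$ are $$\lambda_j=\frac{(-1)^{n+1}}{2\cos\left(\frac{2j-1}{2n+1}\pi\right)},\qquad j=1,2,\ldots,n.$$ Consequently, all eigenvalues of $A(G_n)$ are simple.
   Context: A graph with loops is a pair $(V,E)$ with $E$ a set of 2-element multisets of $V$ (loops allowed, at most one per vertex, no multiple edges); the degree of a vertex counts a loop once. An anti-regular graph with loops is one in which all vertex degrees are distinct; for each $n\ge1$ there is, up to isomorphism, a unique connected one on $n$ vertices, denoted $G_n$, with degree sequence $(1,2,\ldots,n)$. Equivalently, $A(G_n)$ is permutation similar to the $n\times n$ matrix with $(i,j)$ entry $1$ if $i+j\ge n+1$ and $0$ otherwise. The adjacency matrix has diagonal entry $1$ exactly at vertices with a loop. *)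

theory Defs
  imports Complex_Main "Jordan_Normal_Form.Char_Poly"
begin

text \<open>Adjacency matrix of the connected anti-regular graph with loops G_n, in the
  standard labelling: with 1-based indices, entry (i,j) is 1 iff i + j \<ge> n + 1.
  Jordan_Normal_Form matrices are 0-indexed, so the condition becomes i + j \<ge> n - 1.\<close>
definition antireg_adj :: "nat \<Rightarrow> real mat" where
  "antireg_adj n = mat n n (\<lambda>(i, j). if i + j + 2 \<ge> n + 1 then 1 else 0)"

end

theory Submission
  imports Defs
begin

lemma tele_sum:
  fixes phi :: real
  shows "2 * sin (phi/2) * (\<Sum>m\<le>N. cos ((real m + 1/2) * phi)) = sin ((real N + 1) * phi)"
proof (induction N)
  case 0
  then show ?case using sin_times_cos[of "phi/2" "phi/2"] by (simp add: algebra_simps)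
next
  case (Suc N)
  have "2 * sin (phi/2) * cos ((real N + 3/2) * phi) = sin ((real N + 2) * phi) - sin ((real N + 1) * phi)"
    using sin_diff_sin[of "(real N + 2) * phi" "(real N + 1) * phi"]
    by (simp add: algebra_simps add_divide_distrib)
  then show ?case using Suc by (simp add: distrib_left algebra_simps)
qed

lemma Q_facts:
  fixes n j :: nat
  defines "Q \<equiv> (real n + 1/2) * (pi - 2 * ((2 * real j - 1) / (2 * real n + 1) * pi))"
  shows "cos Q = 0" "sin Q = (-1) ^ (n + 1)"
proof -
  define y where "y = pi * of_int (int n + 1 - 2 * int j)"
  have Qy: "Q = pi/2 + y"
    unfolding Q_def y_def by (simp add: field_simps)
  have "cos Q = - sin y" unfolding Qy by (simp add: cos_add)
  also have "sin y = 0" unfolding y_def by (rule sin_npi_int)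
  finally show "cos Q = 0" by simp
  have "sin Q = cos y" unfolding Qy by (simp add: sin_add)
  also have "\<dots> = (-1) ^ (n + 1)" unfolding y_def cos_npi_int
    by (auto simp: even_add)
  finally show "sin Q = (-1) ^ (n + 1)" .
qed

lemma eigen_root:
  fixes n j :: nat
  assumes j: "1 \<le> j" "j \<le> n"
  defines "th \<equiv> (2 * real j - 1) / (2 * real n + 1) * pi"
  shows "poly (char_poly (antireg_adj n)) ((-1) ^ (n + 1) / (2 * cos th)) = 0"
proof -
  define phi where "phi = pi - 2 * th"
  define lam where "lam = (-1::real) ^ (n + 1) / (2 * cos th)"
  define v where "v = vec n (\<lambda>k. cos ((real n - 1/2 - real k) * phi))"
  have th0: "0 < th" unfolding th_def using j by (simp add: field_simps)
  have r: "(2*real j - 1)/(2*real n+1) < 1" using j by (simp add: field_simps)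
  have thpi: "th < pi" unfolding th_def using mult_strict_right_mono[OF r pi_gt_zero] by simp
  have sinth: "sin th > 0" using th0 thpi sin_gt_zero by blast
  have half: "sin (phi/2) = cos th" proof -
    have e: "phi/2 = pi/2 - th" unfolding phi_def by simp
    show ?thesis unfolding e by (simp add: sin_cos_eq)
  qed
  have costh: "cos th \<noteq> 0"
  proof
    assume "cos th = 0"
    then have "th = pi/2" using cos_inj_pi[of th "pi/2"] th0 thpi by simp
    then have "(2 * real j - 1) / (2 * real n + 1) * pi = 1/2 * pi" unfolding th_def by simp
    then have "(2 * real j - 1) / (2 * real n + 1) = 1/2" using pi_neq_zero mult_cancel_right by blast
    then have "real (4 * j) = real (2 * n + 3)" by (simp add: field_simps)
    then have "4 * j = 2 * n + 3" by (simp only: of_nat_eq_iff)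
    then show False by presburger
  qed
  have A: "antireg_adj n \<in> carrier_mat n n" unfolding antireg_adj_def by simp
  have Av: "antireg_adj n *\<^sub>v v = lam \<cdot>\<^sub>v v"
  proof (rule eq_vecI)
    fix i assume "i < dim_vec (lam \<cdot>\<^sub>v v)"
    then have i: "i < n" unfolding v_def by simp
    have "(antireg_adj n *\<^sub>v v) $ i = (\<Sum>k<n. (if n \<le> i + k + 1 then 1 else 0) * cos ((real n - 1/2 - real k) * phi))"
      using i unfolding antireg_adj_def v_def by (simp add: scalar_prod_def lessThan_atLeast0)
    also have "\<dots> = (\<Sum>k\<in>{k\<in>{..<n}. n \<le> i + k + 1}. cos ((real n - 1/2 - real k) * phi))"
      by (simp only: sum.inter_filter[OF finite_lessThan]) (intro sum.cong refl, simp)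
    also have "{k\<in>{..<n}. n \<le> i + k + 1} = (\<lambda>m. n - 1 - m) ` {..i}"
    proof
      show "{k\<in>{..<n}. n \<le> i + k + 1} \<subseteq> (\<lambda>m. n - 1 - m) ` {..i}"
      proof
        fix k assume "k \<in> {k\<in>{..<n}. n \<le> i + k + 1}"
        then have "k < n" "n \<le> i + k + 1" by auto
        then show "k \<in> (\<lambda>m. n - 1 - m) ` {..i}" by (intro image_eqI[of _ _ "n - 1 - k"]) auto
      qed
      show "(\<lambda>m. n - 1 - m) ` {..i} \<subseteq> {k\<in>{..<n}. n \<le> i + k + 1}" using i by auto
    qed
    also have "(\<Sum>k\<in>(\<lambda>m. n - 1 - m) ` {..i}. cos ((real n - 1/2 - real k) * phi))
        = (\<Sum>m\<le>i. cos ((real n - 1/2 - real (n - 1 - m)) * phi))"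
      by (subst sum.reindex) (use i in \<open>auto intro!: inj_onI\<close>)
    also have "\<dots> = (\<Sum>m\<le>i. cos ((real m + 1/2) * phi))"
      by (intro sum.cong refl) (use i in \<open>simp add: of_nat_diff add.commute\<close>)
    also have "\<dots> = sin ((real i + 1) * phi) / (2 * cos th)"
      using tele_sum[of phi i] costh half by (simp add: field_simps)
    also have "sin ((real i + 1) * phi) = (-1) ^ (n + 1) * cos ((real n - 1/2 - real i) * phi)"
    proof -
      define Q where "Q = (real n + 1/2) * phi"
      have "cos Q = 0" "sin Q = (-1) ^ (n + 1)"
        using Q_facts[of n j] unfolding Q_def phi_def th_def by auto
      moreover have "(real n - 1/2 - real i) * phi = Q - (real i + 1) * phi"
        unfolding Q_def by (simp add: algebra_simps)
      ultimately show ?thesis by (simp add: cos_diff)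
    qed
    finally show "(antireg_adj n *\<^sub>v v) $ i = (lam \<cdot>\<^sub>v v) $ i"
      using i unfolding v_def lam_def by simp
  qed (simp add: v_def antireg_adj_def)
  have "v \<noteq> 0\<^sub>v n"
  proof
    assume "v = 0\<^sub>v n"
    then have "v $ (n - 1) = 0" using j by simp
    moreover have "v $ (n - 1) = cos (phi / 2)" using j unfolding v_def by (simp add: of_nat_diff)
    moreover have "cos (phi/2) = sin th"
    proof -
      have e: "phi/2 = pi/2 - th" unfolding phi_def by simp
      show ?thesis unfolding e by (simp add: cos_sin_eq)
    qed
    ultimately show False using sinth by simp
  qed
  then have "eigenvalue (antireg_adj n) lam"
    unfolding eigenvalue_def eigenvector_def using Av A
    by (intro exI[of _ v]) (auto simp: v_def)
  then show ?thesis using eigenvalue_root_char_poly[OF A] unfolding lam_def by simp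
qed

lemma theta_facts:
  fixes n j :: nat
  assumes j: "1 \<le> j" "j \<le> n"
  defines "th \<equiv> (2 * real j - 1) / (2 * real n + 1) * pi"
  shows "0 < th" "th < pi" "cos th \<noteq> 0"
proof -
  show th0: "0 < th" unfolding th_def using j by (simp add: field_simps)
  have r: "(2*real j - 1)/(2*real n+1) < 1" using j by (simp add: field_simps)
  show thpi: "th < pi" unfolding th_def using mult_strict_right_mono[OF r pi_gt_zero] by simp
  show "cos th \<noteq> 0"
  proof
    assume "cos th = 0"
    then have "th = pi/2" using cos_inj_pi[of th "pi/2"] th0 thpi by simp
    then have "(2 * real j - 1) / (2 * real n + 1) * pi = 1/2 * pi" unfolding th_def by simp
    then have "(2 * real j - 1) / (2 * real n + 1) = 1/2" using pi_neq_zero mult_cancel_right by blast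
    then have "real (4 * j) = real (2 * n + 3)" by (simp add: field_simps)
    then have "4 * j = 2 * n + 3" by (simp only: of_nat_eq_iff)
    then show False by presburger
  qed
qed

theorem mainTheorem6:
  fixes n :: nat
  assumes "n \<ge> 1"
  defines "lam \<equiv> (\<lambda>j::nat. (-1) ^ (n + 1) / (2 * cos ((2 * real j - 1) / (2 * real n + 1) * pi)))"
  shows "char_poly (antireg_adj n) = (\<Prod>j = 1..n. [:- lam j, 1:])
         \<and> inj_on lam {1..n}"
proof -
  have inj: "inj_on lam {1..n}"
  proof (rule inj_onI)
    fix j k assume jk: "j \<in> {1..n}" "k \<in> {1..n}" "lam j = lam k"
    define tj where "tj = (2 * real j - 1) / (2 * real n + 1) * pi"
    define tk where "tk = (2 * real k - 1) / (2 * real n + 1) * pi"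
    have fj: "0 < tj" "tj < pi" "cos tj \<noteq> 0" using theta_facts[of j n] jk unfolding tj_def by auto
    have fk: "0 < tk" "tk < pi" "cos tk \<noteq> 0" using theta_facts[of k n] jk unfolding tk_def by auto
    have "(-1::real) ^ (n + 1) / (2 * cos tj) = (-1) ^ (n + 1) / (2 * cos tk)"
      using jk(3) unfolding lam_def tj_def tk_def by simp
    then have "cos tj = cos tk" using fj fk by (simp add: field_simps)
    then have "tj = tk" using cos_inj_pi[of tj tk] fj fk by simp
    then have "(2 * real j - 1) / (2 * real n + 1) = (2 * real k - 1) / (2 * real n + 1)"
      unfolding tj_def tk_def using pi_neq_zero mult_cancel_right by blast
    then have "real j = real k" by (simp add: field_simps)
    then show "j = k" by simp
  qed
  have A: "antireg_adj n \<in> carrier_mat n n" unfolding antireg_adj_def by simp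
  have dc: "degree (char_poly (antireg_adj n)) = n \<and> coeff (char_poly (antireg_adj n)) n = 1"
    by (rule degree_monic_char_poly[OF A])
  have dp: "degree (\<Prod>j = 1..n. [:- lam j, 1:]) = n"
    by (subst degree_prod_sum_eq) auto
  have lp: "lead_coeff (\<Prod>j = 1..n. [:- lam j, 1:]) = 1"
    by (simp add: lead_coeff_prod)
  have "char_poly (antireg_adj n) = (\<Prod>j = 1..n. [:- lam j, 1:])"
  proof (rule poly_eqI_degree_lead_coeff[of _ n _ "lam ` {1..n}"])
    show "coeff (char_poly (antireg_adj n)) n = coeff (\<Prod>j = 1..n. [:- lam j, 1:]) n"
      using dc dp lp by simp
    show "n \<le> card (lam ` {1..n})" using card_image[OF inj] by simp
    show "degree (char_poly (antireg_adj n)) \<le> n" using dc by simp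
    show "degree (\<Prod>j = 1..n. [:- lam j, 1:]) \<le> n" using dp by simp
    fix z assume "z \<in> lam ` {1..n}"
    then obtain j where j: "j \<in> {1..n}" "z = lam j" by auto
    have "poly (char_poly (antireg_adj n)) z = 0"
      using eigen_root[of j n] j unfolding lam_def by auto
    moreover have "poly (\<Prod>j = 1..n. [:- lam j, 1:]) z = 0"
      using j by (auto simp: poly_prod prod_zero_iff)
    ultimately show "poly (char_poly (antireg_adj n)) z = poly (\<Prod>j = 1..n. [:- lam j, 1:]) z" by simp
  qed
  with inj show ?thesis by simp
qed

end
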